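(* For each $k\in\mathbb N$ there exists $C'_k\in[0,\infty)$ such that $\mathbb E(M_n^k)\le C'_k n^{-k}$ for all $n\in\mathbb N$.
   Context: Kakutani's interval-splitting process: let $U_1,U_2,\dots$ be i.i.d. uniform random variables on $[0,1]$. At time $0$ the partition of $[0,1]$ consists of the single interval $[0,1]$. Given the partition at time $n\in\mathbb Z_+$ (which consists of $n+1$ intervals, whose lengths are a.s. distinct), let $[a,b]$ be the interval of maximal length; the partition at time $n+1$ is obtained by replacing $[a,b]$ by the two intervals $[a,a+U_{n+1}(b-a)]$ and $[a+U_{n+1}(b-a),b]$. $M_n$ is the maximal interval length at time $n$. *)

theory Defs
  imports "HOL-Probability.Probability"
begin

text \<open>A partition of [0,1] is represented as a list of intervals (a,b).
  split_first m x P replaces the first interval of length m in P by its two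
  pieces [a, a + x(b-a)] and [a + x(b-a), b].\<close>

fun split_first :: "real \<Rightarrow> real \<Rightarrow> (real \<times> real) list \<Rightarrow> (real \<times> real) list" where
  "split_first m x [] = []"
| "split_first m x ((a,b) # P) =
     (if b - a = m then (a, a + x * (b - a)) # (a + x * (b - a), b) # P
      else (a, b) # split_first m x P)"

definition max_len :: "(real \<times> real) list \<Rightarrow> real" where
  "max_len P = Max (set (map (\<lambda>(a,b). b - a) P))"

text \<open>Kakutani partition at time n driven by the sequence u (u (Suc n) = U_{n+1}).\<close>
fun kakutani_part :: "(nat \<Rightarrow> real) \<Rightarrow> nat \<Rightarrow> (real \<times> real) list" where
  "kakutani_part u 0 = [(0, 1)]"
| "kakutani_part u (Suc n) =
     split_first (max_len (kakutani_part u n)) (u (Suc n)) (kakutani_part u n)"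

definition kakutani_max :: "(nat \<Rightarrow> real) \<Rightarrow> nat \<Rightarrow> real" where
  "kakutani_max u n = max_len (kakutani_part u n)"

end

theory Submission
  imports Defs
begin

definition ilen :: "real \<times> real \<Rightarrow> real" where "ilen p = snd p - fst p"

lemma max_len_ilen: "max_len P = Max (ilen ` set P)"
  unfolding max_len_def ilen_def by (simp add: split_beta cong: image_cong)

lemma sf_len: "m \<in> ilen ` set P \<Longrightarrow> length (split_first m x P) = Suc (length P)"
proof (induction P)
  case Nil then show ?case by simp
next
  case (Cons q P)
  obtain a b where q: "q = (a,b)" by force
  show ?case
  proof (cases "b - a = m")
    case True then show ?thesis by (simp add: q)
  next
    case False
    then have "m \<in> ilen ` set P" using Cons.prems by (auto simp: q ilen_def)
    then show ?thesis using False Cons.IH by (simp add: q)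
  qed
qed

lemma sf_sum: fixes h :: "real \<Rightarrow> real" shows "m \<in> ilen ` set P \<Longrightarrow>
   sum_list (map (\<lambda>p. h (ilen p)) (split_first m x P))
   = sum_list (map (\<lambda>p. h (ilen p)) P) - h m + h (x*m) + h (m - x*m)"
proof (induction P)
  case Nil then show ?case by simp
next
  case (Cons q P)
  obtain a b where q: "q = (a,b)" by force
  show ?case
  proof (cases "b - a = m")
    case True
    have e1: "ilen (a, a + x * m) = x*m" using True by (simp add: ilen_def)
    have e2: "ilen (a + x * m, b) = m - x*m" using True by (simp add: ilen_def algebra_simps)
    have e3: "ilen (a,b) = m" using True by (simp add: ilen_def)
    have "split_first m x (q # P) = (a, a + x * m) # (a + x * m, b) # P" using True by (simp add: q)
    then have "sum_list (map (\<lambda>p. h (ilen p)) (split_first m x (q # P)))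
        = h (x*m) + h (m - x*m) + sum_list (map (\<lambda>p. h (ilen p)) P)" by (simp add: e1 e2 add.assoc)
    moreover have "sum_list (map (\<lambda>p. h (ilen p)) (q # P)) = h m + sum_list (map (\<lambda>p. h (ilen p)) P)" by (simp add: q e3)
    ultimately show ?thesis by linarith
  next
    case False
    then have "m \<in> ilen ` set P" using Cons.prems by (auto simp: q ilen_def)
    then show ?thesis using False Cons.IH by (simp add: q)
  qed
qed

lemma sf_bound: "\<forall>p\<in>set P. 0 \<le> ilen p \<and> ilen p \<le> m \<Longrightarrow> 0 \<le> x \<Longrightarrow> x \<le> 1 \<Longrightarrow>
   \<forall>p\<in>set (split_first m x P). 0 \<le> ilen p \<and> ilen p \<le> m"
proof (induction P)
  case Nil then show ?case by simp
next
  case (Cons q P)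
  obtain a b where q: "q = (a,b)" by force
  have m0: "0 \<le> b - a" using Cons.prems q by (auto simp: ilen_def)
  show ?case
  proof (cases "b - a = m")
    case True
    have "x * (b-a) \<le> 1 * (b - a)" using Cons.prems m0 by (intro mult_right_mono) auto
    moreover have "0 \<le> x * (b-a)" using Cons.prems m0 by simp
    ultimately show ?thesis using True Cons.prems by (auto simp: q ilen_def algebra_simps)
  next
    case False
    then show ?thesis using Cons by (auto simp: q)
  qed
qed

lemma kp_len: "length (kakutani_part u n) = Suc n"
proof (induction n)
  case 0 then show ?case by simp
next
  case (Suc n)
  have "max_len (kakutani_part u n) \<in> ilen ` set (kakutani_part u n)"
    unfolding max_len_ilen using Suc by (intro Max_in) auto
  then show ?case using Suc by (simp add: sf_len)
qed

lemma kp_dep: "(\<forall>j\<in>{1..n}. u j = v j) \<Longrightarrow> kakutani_part u n = kakutani_part v n"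
  by (induction n) auto

lemma max_in: "max_len (kakutani_part u n) \<in> ilen ` set (kakutani_part u n)"
  unfolding max_len_ilen using kp_len[of u n] by (intro Max_in) auto

lemma max_ge: "p \<in> set (kakutani_part u n) \<Longrightarrow> ilen p \<le> max_len (kakutani_part u n)"
  unfolding max_len_ilen by (intro Max_ge) auto

lemma kp_props:
  assumes "\<And>j. 0 \<le> u j \<and> u j \<le> 1"
  shows "(\<forall>p\<in>set (kakutani_part u n). 0 \<le> ilen p) \<and> sum_list (map ilen (kakutani_part u n)) = 1
     \<and> kakutani_max u (Suc n) \<le> kakutani_max u n"
proof (induction n)
  case 0
  have "max_len [(0::real, 1::real)] = 1" by (simp add: max_len_def)
  moreover have "max_len (split_first 1 (u (Suc 0)) [(0, 1)]) \<le> 1"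
  proof -
    have "\<forall>p\<in>set (split_first 1 (u (Suc 0)) [(0, 1)]). 0 \<le> ilen p \<and> ilen p \<le> 1"
      using assms by (intro sf_bound) (auto simp: ilen_def)
    moreover have "max_len (split_first 1 (u (Suc 0)) [(0, 1)]) \<in> ilen ` set (split_first 1 (u (Suc 0)) [(0, 1)])"
      unfolding max_len_ilen using assms by (intro Max_in) auto
    ultimately show ?thesis by auto
  qed
  ultimately show ?case by (simp add: kakutani_max_def ilen_def)
next
  case (Suc n)
  let ?P = "kakutani_part u n" and ?m = "max_len (kakutani_part u n)"
  have b: "\<forall>p\<in>set ?P. 0 \<le> ilen p \<and> ilen p \<le> ?m" using Suc max_ge by blast
  have b2: "\<forall>p\<in>set (kakutani_part u (Suc n)). 0 \<le> ilen p \<and> ilen p \<le> ?m"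
    using sf_bound[OF b, of "u (Suc n)"] assms by simp
  have s: "sum_list (map ilen (kakutani_part u (Suc n))) = 1"
    using sf_sum[OF max_in, of id u n "u (Suc n)"] Suc by simp
  let ?Q = "kakutani_part u (Suc n)" and ?m' = "max_len (kakutani_part u (Suc n))"
  have b3: "\<forall>p\<in>set (split_first ?m' (u (Suc (Suc n))) ?Q). 0 \<le> ilen p \<and> ilen p \<le> ?m'"
    using b2 max_ge[of _ u "Suc n"] assms by (intro sf_bound) auto
  have "kakutani_max u (Suc (Suc n)) \<in> ilen ` set (split_first ?m' (u (Suc (Suc n))) ?Q)"
    using max_in[of u "Suc (Suc n)"] by (simp add: kakutani_max_def)
  then have "kakutani_max u (Suc (Suc n)) \<le> ?m'" using b3 by auto
  then show ?case using b2 s by (auto simp: kakutani_max_def)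
qed

definition Phi :: "(nat \<Rightarrow> real) \<Rightarrow> nat \<Rightarrow> real" where
  "Phi u n = sum_list (map (\<lambda>p. sqrt (ilen p)) (kakutani_part u n))"

definition Dfun :: "real \<Rightarrow> real" where "Dfun v = sqrt v + sqrt (1 - v) - 1"

lemma Phi_0: "Phi u 0 = 1" by (simp add: Phi_def ilen_def)

lemma Phi_Suc: "Phi u (Suc n) = Phi u n + sqrt (kakutani_max u n) * Dfun (u (Suc n))"
proof -
  let ?m = "max_len (kakutani_part u n)" and ?x = "u (Suc n)"
  have "Phi u (Suc n) = Phi u n - sqrt ?m + sqrt (?x * ?m) + sqrt (?m - ?x * ?m)"
    unfolding Phi_def using sf_sum[OF max_in, of sqrt u n ?x] by simp
  moreover have "?m - ?x * ?m = (1 - ?x) * ?m" by (simp add: algebra_simps)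
  then have "sqrt (?m - ?x * ?m) = sqrt (1 - ?x) * sqrt ?m" by (simp only: real_sqrt_mult)
  moreover have "sqrt (?x * ?m) = sqrt ?x * sqrt ?m" by (simp only: real_sqrt_mult)
  ultimately show ?thesis by (simp add: Dfun_def kakutani_max_def algebra_simps)
qed

lemma amgm: assumes "0 \<le> l" "0 < c" shows "sqrt l \<le> (c * l + 1 / c) / 2"
proof -
  have "0 \<le> (c * sqrt l - 1)^2" by simp
  also have "(c * sqrt l - 1)^2 = c^2 * l - 2 * c * sqrt l + 1"
    using assms by (simp add: power2_eq_square algebra_simps)
  finally have "2 * c * sqrt l \<le> c^2 * l + 1" by simp
  then have "2 * c * sqrt l / c \<le> (c^2 * l + 1) / c" using assms by (intro divide_right_mono) auto
  then show ?thesis using assms by (simp add: power2_eq_square field_simps)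
qed

lemma Phi_le:
  assumes "\<And>j. 0 \<le> u j \<and> u j \<le> 1"
  shows "Phi u n \<le> sqrt (Suc n)"
proof -
  define c where "c = sqrt (Suc n)"
  have c: "0 < c" by (simp add: c_def)
  have pr: "(\<forall>p\<in>set (kakutani_part u n). 0 \<le> ilen p) \<and> sum_list (map ilen (kakutani_part u n)) = 1"
    using kp_props[of u, OF assms] by blast
  have "Phi u n \<le> sum_list (map (\<lambda>p. c / 2 * ilen p + 1 / (2 * c)) (kakutani_part u n))"
    unfolding Phi_def
  proof (rule sum_list_mono)
    fix p assume "p \<in> set (kakutani_part u n)"
    then have "sqrt (ilen p) \<le> (c * ilen p + 1 / c) / 2" using pr c by (intro amgm) auto
    then show "sqrt (ilen p) \<le> c / 2 * ilen p + 1 / (2 * c)" by (simp add: field_simps)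
  qed
  also have "\<dots> = c / 2 * sum_list (map ilen (kakutani_part u n)) + real (Suc n) * (1 / (2 * c))"
    by (subst sum_list_addf, subst sum_list_const_mult, subst sum_list_triv) (simp add: kp_len)
  also have "\<dots> = c" using pr c by (simp add: c_def field_simps)
  finally show ?thesis by (simp add: c_def)
qed

lemma Phi_nonneg:
  assumes "\<And>j. 0 \<le> u j \<and> u j \<le> 1"
  shows "0 \<le> Phi u n"
  unfolding Phi_def using kp_props[of u, OF assms] by (intro sum_list_nonneg) auto

lemma sqrt_ge_self: "0 \<le> v \<Longrightarrow> v \<le> 1 \<Longrightarrow> v \<le> sqrt v"
proof -
  assume a: "0 \<le> v" "v \<le> 1"
  have "sqrt v * sqrt v \<le> sqrt v * 1" using a by (intro mult_left_mono) auto
  then show ?thesis using a by simp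
qed

lemma Dfun_nonneg: "0 \<le> v \<Longrightarrow> v \<le> 1 \<Longrightarrow> 0 \<le> Dfun v"
  using sqrt_ge_self[of v] sqrt_ge_self[of "1 - v"] by (simp add: Dfun_def)

lemma chord: assumes "1/4 \<le> y" "y \<le> 1" shows "1/3 + 2*y/3 \<le> sqrt y"
proof -
  define r where "r = sqrt y"
  have "sqrt (1/4) \<le> r" using assms by (simp add: r_def del: real_sqrt_divide)
  moreover have "sqrt (1/4) = (1/2::real)" by (simp add: real_sqrt_divide)
  ultimately have r1: "1/2 \<le> r" by simp
  have r2: "r \<le> 1" using assms by (simp add: r_def)
  have y: "y = r * r" using assms by (simp add: r_def)
  have "(2*r-1)*(r-1) \<le> 0" using r1 r2 by (intro mult_nonneg_nonpos) auto
  then show ?thesis unfolding y by (simp add: r_def[symmetric] algebra_simps)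
qed

lemma Dfun_mid: assumes "1/4 \<le> v" "v \<le> 3/4" shows "1/3 \<le> Dfun v"
proof -
  have "1/3 + 2 * v / 3 \<le> sqrt v" using assms by (intro chord) auto
  moreover have "1/3 + 2 * (1 - v) / 3 \<le> sqrt (1-v)" using assms by (intro chord) auto
  ultimately show ?thesis unfolding Dfun_def by (simp add: field_simps)
qed

lemma exp_Dfun: assumes "0 \<le> v" "v \<le> 1"
  shows "exp (- 6 * Dfun v) \<le> 1 - 2/3 * indicator {1/4..3/4} v"
proof (cases "v \<in> {1/4..3/4}")
  case True
  then have "exp (- 6 * Dfun v) \<le> exp (-2)" using Dfun_mid[of v] by simp
  also have "exp (-2) \<le> (1/3::real)"
  proof -
    have "3 \<le> exp (2::real)" using exp_ge_add_one_self[of 2] by simp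
    then show ?thesis by (simp add: exp_minus field_simps)
  qed
  finally show ?thesis using True by simp
next
  case False
  then show ?thesis using Dfun_nonneg[OF assms] by simp
qed

lemma meas_sf:
  fixes P :: "'b \<Rightarrow> (real \<times> real) list"
  assumes "\<And>\<omega>. length (P \<omega>) = L"
    and "\<And>i. (\<lambda>\<omega>. fst (P \<omega> ! i)) \<in> borel_measurable N"
    and "\<And>i. (\<lambda>\<omega>. snd (P \<omega> ! i)) \<in> borel_measurable N"
    and m[measurable]: "m \<in> borel_measurable N" and x[measurable]: "x \<in> borel_measurable N"
  shows "(\<lambda>\<omega>. fst (split_first (m \<omega>) (x \<omega>) (P \<omega>) ! i)) \<in> borel_measurable N \<and>
         (\<lambda>\<omega>. snd (split_first (m \<omega>) (x \<omega>) (P \<omega>) ! i)) \<in> borel_measurable N"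
  using assms(1-3)
proof (induction L arbitrary: P i)
  case 0
  then have "\<And>\<omega>. P \<omega> = []" by simp
  then show ?case by simp
next
  case (Suc L)
  define a where "a \<omega> = fst (P \<omega> ! 0)" for \<omega>
  define b where "b \<omega> = snd (P \<omega> ! 0)" for \<omega>
  define T where "T \<omega> = tl (P \<omega>)" for \<omega>
  have PT: "P \<omega> = (a \<omega>, b \<omega>) # T \<omega>" for \<omega>
    using Suc.prems(1)[of \<omega>] unfolding a_def b_def T_def by (cases "P \<omega>") auto
  have a[measurable]: "a \<in> borel_measurable N" unfolding a_def by (rule Suc.prems)
  have b[measurable]: "b \<in> borel_measurable N" unfolding b_def by (rule Suc.prems)
  have Tf[measurable]: "(\<lambda>\<omega>. fst (T \<omega> ! j)) \<in> borel_measurable N" for j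
  proof -
    have "(\<lambda>\<omega>. fst (T \<omega> ! j)) = (\<lambda>\<omega>. fst (P \<omega> ! Suc j))" using PT by (simp add: fun_eq_iff)
    then show ?thesis using Suc.prems by simp
  qed
  have Ts[measurable]: "(\<lambda>\<omega>. snd (T \<omega> ! j)) \<in> borel_measurable N" for j
  proof -
    have "(\<lambda>\<omega>. snd (T \<omega> ! j)) = (\<lambda>\<omega>. snd (P \<omega> ! Suc j))" using PT by (simp add: fun_eq_iff)
    then show ?thesis using Suc.prems by simp
  qed
  have lT: "length (T \<omega>) = L" for \<omega> using Suc.prems(1)[of \<omega>] PT[of \<omega>] by simp
  have IH: "(\<lambda>\<omega>. fst (split_first (m \<omega>) (x \<omega>) (T \<omega>) ! j)) \<in> borel_measurable N \<and>
         (\<lambda>\<omega>. snd (split_first (m \<omega>) (x \<omega>) (T \<omega>) ! j)) \<in> borel_measurable N" for j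
    using Suc.IH[of T j] lT Tf Ts by blast
  have IH1[measurable]: "(\<lambda>\<omega>. fst (split_first (m \<omega>) (x \<omega>) (T \<omega>) ! j)) \<in> borel_measurable N" for j
    using IH by blast
  have IH2[measurable]: "(\<lambda>\<omega>. snd (split_first (m \<omega>) (x \<omega>) (T \<omega>) ! j)) \<in> borel_measurable N" for j
    using IH by blast
  have c[measurable]: "{\<omega> \<in> space N. b \<omega> - a \<omega> = m \<omega>} \<in> sets N" by measurable
  have sf: "split_first (m \<omega>) (x \<omega>) (P \<omega>) = (if b \<omega> - a \<omega> = m \<omega> then
     (a \<omega>, a \<omega> + x \<omega> * (b \<omega> - a \<omega>)) # (a \<omega> + x \<omega> * (b \<omega> - a \<omega>), b \<omega>) # T \<omega>
     else (a \<omega>, b \<omega>) # split_first (m \<omega>) (x \<omega>) (T \<omega>))" for \<omega>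
    by (simp add: PT)
  let ?c = "\<lambda>\<omega>. b \<omega> - a \<omega> = m \<omega>"
  show ?case
  proof (cases i)
    case 0
    have "(\<lambda>\<omega>. fst (split_first (m \<omega>) (x \<omega>) (P \<omega>) ! i)) = a"
      by (simp add: sf 0 fun_eq_iff)
    moreover have "(\<lambda>\<omega>. snd (split_first (m \<omega>) (x \<omega>) (P \<omega>) ! i)) =
      (\<lambda>\<omega>. if ?c \<omega> then a \<omega> + x \<omega> * (b \<omega> - a \<omega>) else b \<omega>)"
      by (simp add: sf 0 fun_eq_iff)
    ultimately show ?thesis by simp
  next
    case (Suc j)
    show ?thesis
    proof (cases j)
      case 0
      have "(\<lambda>\<omega>. fst (split_first (m \<omega>) (x \<omega>) (P \<omega>) ! i)) =
        (\<lambda>\<omega>. if ?c \<omega> then a \<omega> + x \<omega> * (b \<omega> - a \<omega>) else fst (split_first (m \<omega>) (x \<omega>) (T \<omega>) ! 0))"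
        by (simp add: sf 0 \<open>i = Suc j\<close> fun_eq_iff)
      moreover have "(\<lambda>\<omega>. snd (split_first (m \<omega>) (x \<omega>) (P \<omega>) ! i)) =
        (\<lambda>\<omega>. if ?c \<omega> then b \<omega> else snd (split_first (m \<omega>) (x \<omega>) (T \<omega>) ! 0))"
        by (simp add: sf 0 \<open>i = Suc j\<close> fun_eq_iff)
      ultimately show ?thesis by simp
    next
      case (Suc j')
      have "(\<lambda>\<omega>. fst (split_first (m \<omega>) (x \<omega>) (P \<omega>) ! i)) =
        (\<lambda>\<omega>. if ?c \<omega> then fst (T \<omega> ! j') else fst (split_first (m \<omega>) (x \<omega>) (T \<omega>) ! j))"
        by (simp add: sf Suc \<open>i = Suc j\<close> fun_eq_iff)
      moreover have "(\<lambda>\<omega>. snd (split_first (m \<omega>) (x \<omega>) (P \<omega>) ! i)) =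
        (\<lambda>\<omega>. if ?c \<omega> then snd (T \<omega> ! j') else snd (split_first (m \<omega>) (x \<omega>) (T \<omega>) ! j))"
        by (simp add: sf Suc \<open>i = Suc j\<close> fun_eq_iff)
      ultimately show ?thesis by simp
    qed
  qed
qed

lemma ilen_set_nth: "ilen ` set P = (\<lambda>i. ilen (P ! i)) ` {..<length P}"
proof -
  have "set P = (\<lambda>i. P ! i) ` {..<length P}" by (auto simp: in_set_conv_nth image_iff) (metis lessThan_iff)
  then show ?thesis by (simp add: image_image)
qed

lemma meas_kp:
  assumes "\<And>j. j \<in> {1..n} \<Longrightarrow> (\<lambda>\<omega>. u \<omega> j) \<in> borel_measurable N"
  shows "(\<lambda>\<omega>. fst (kakutani_part (u \<omega>) n ! i)) \<in> borel_measurable N \<and>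
         (\<lambda>\<omega>. snd (kakutani_part (u \<omega>) n ! i)) \<in> borel_measurable N"
  using assms
proof (induction n arbitrary: i)
  case 0
  then show ?case by simp
next
  case (Suc n)
  have h1[measurable]: "(\<lambda>\<omega>. fst (kakutani_part (u \<omega>) n ! i)) \<in> borel_measurable N" for i
    using Suc by auto
  have h2[measurable]: "(\<lambda>\<omega>. snd (kakutani_part (u \<omega>) n ! i)) \<in> borel_measurable N" for i
    using Suc by auto
  have mx: "(\<lambda>\<omega>. max_len (kakutani_part (u \<omega>) n)) \<in> borel_measurable N"
    unfolding max_len_ilen ilen_set_nth kp_len ilen_def by measurable
  have ux: "(\<lambda>\<omega>. u \<omega> (Suc n)) \<in> borel_measurable N" using Suc.prems by auto
  show ?case
    using meas_sf[where P="\<lambda>\<omega>. kakutani_part (u \<omega>) n" and L="Suc n", OF kp_len h1 h2 mx ux] by simp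
qed

lemma meas_max:
  assumes "\<And>j. j \<in> {1..n} \<Longrightarrow> (\<lambda>\<omega>. u \<omega> j) \<in> borel_measurable N"
  shows "(\<lambda>\<omega>. kakutani_max (u \<omega>) n) \<in> borel_measurable N"
proof -
  have h1[measurable]: "(\<lambda>\<omega>. fst (kakutani_part (u \<omega>) n ! i)) \<in> borel_measurable N" for i
    using meas_kp[OF assms] by auto
  have h2[measurable]: "(\<lambda>\<omega>. snd (kakutani_part (u \<omega>) n ! i)) \<in> borel_measurable N" for i
    using meas_kp[OF assms] by auto
  show ?thesis unfolding kakutani_max_def max_len_ilen ilen_set_nth kp_len ilen_def by measurable
qed

lemma meas_Phi:
  assumes "\<And>j. j \<in> {1..n} \<Longrightarrow> (\<lambda>\<omega>. u \<omega> j) \<in> borel_measurable N"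
  shows "(\<lambda>\<omega>. Phi (u \<omega>) n) \<in> borel_measurable N"
proof -
  have h1[measurable]: "(\<lambda>\<omega>. fst (kakutani_part (u \<omega>) n ! i)) \<in> borel_measurable N" for i
    using meas_kp[OF assms] by auto
  have h2[measurable]: "(\<lambda>\<omega>. snd (kakutani_part (u \<omega>) n ! i)) \<in> borel_measurable N" for i
    using meas_kp[OF assms] by auto
  show ?thesis unfolding Phi_def sum_list_sum_nth by (simp add: kp_len ilen_def) measurable
qed

definition Gf :: "real \<Rightarrow> real \<Rightarrow> nat \<Rightarrow> (nat \<Rightarrow> real) \<Rightarrow> real" where
  "Gf lam tau N x = exp (- lam * Phi x N) * (\<Prod>m<N. if tau < kakutani_max x m then 1 else 0)"

lemma Gf_dep: "(\<forall>j\<in>{1..N}. u j = v j) \<Longrightarrow> Gf lam tau N u = Gf lam tau N v"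
proof -
  assume a: "\<forall>j\<in>{1..N}. u j = v j"
  have "Phi u N = Phi v N" unfolding Phi_def using kp_dep[OF a] by simp
  moreover have "kakutani_max u m = kakutani_max v m" if "m < N" for m
    unfolding kakutani_max_def using kp_dep[of m u v] a that by auto
  ultimately show ?thesis unfolding Gf_def by (intro arg_cong2[where f="(*)"] prod.cong) auto
qed

lemma Gf_bounds:
  assumes "\<And>j. 0 \<le> u j \<and> u j \<le> 1" "0 \<le> lam"
  shows "0 \<le> Gf lam tau N u \<and> Gf lam tau N u \<le> 1"
proof -
  have "0 \<le> Phi u N" by (rule Phi_nonneg[OF assms(1)])
  then have "exp (- lam * Phi u N) \<le> 1" using assms(2) by simp
  moreover have "(\<Prod>m<N. if tau < kakutani_max u m then 1 else 0) \<le> (1::real)"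
    by (intro prod_le_1) auto
  moreover have "0 \<le> (\<Prod>m<N. if tau < kakutani_max u m then 1 else (0::real))"
    by (intro prod_nonneg) auto
  ultimately show ?thesis unfolding Gf_def by (simp add: mult_le_one)
qed

lemma Gf_step:
  assumes u: "\<And>j. 0 \<le> u j \<and> u j \<le> 1" and lam: "0 \<le> lam" "6 \<le> lam * sqrt tau"
  shows "Gf lam tau (Suc N) u \<le> Gf lam tau N u * exp (- 6 * Dfun (u (Suc N)))"
proof (cases "tau < kakutani_max u N")
  case False
  then have "Gf lam tau (Suc N) u = 0" by (simp add: Gf_def)
  moreover have "0 \<le> Gf lam tau N u" using Gf_bounds[OF u lam(1)] by simp
  ultimately show ?thesis by simp
next
  case True
  let ?D = "Dfun (u (Suc N))" and ?M = "kakutani_max u N"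
  have D: "0 \<le> ?D" using u by (intro Dfun_nonneg) auto
  have "sqrt tau \<le> sqrt ?M" using True by simp
  then have "lam * sqrt tau \<le> lam * sqrt ?M" using lam by (intro mult_left_mono) auto
  then have "6 \<le> lam * sqrt ?M" using lam by linarith
  then have "6 * ?D \<le> lam * sqrt ?M * ?D" using D by (intro mult_right_mono) auto
  then have e: "exp (- lam * Phi u (Suc N)) \<le> exp (- lam * Phi u N) * exp (- 6 * ?D)"
    by (simp add: Phi_Suc algebra_simps flip: exp_add)
  have p: "0 \<le> (\<Prod>m<N. if tau < kakutani_max u m then 1 else (0::real))"
    by (intro prod_nonneg) auto
  show ?thesis using True unfolding Gf_def
    using mult_right_mono[OF e p] by (simp add: algebra_simps)
qed

lemma Gf_meas: "Gf lam tau N \<in> borel_measurable (PiM {1..N} (\<lambda>_. borel))"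
proof -
  have [measurable]: "(\<lambda>x. Phi x N) \<in> borel_measurable (PiM {1..N} (\<lambda>_. borel))"
    by (rule meas_Phi[where u="\<lambda>x. x"]) simp
  have mx: "(\<lambda>x. kakutani_max x m) \<in> borel_measurable (PiM {1..N} (\<lambda>_. borel))" if "m < N" for m
    by (rule meas_max[where u="\<lambda>x. x"]) (use that in auto)
  have "(\<lambda>x. \<Prod>m<N. if tau < kakutani_max x m then 1 else (0::real)) \<in> borel_measurable (PiM {1..N} (\<lambda>_. borel))"
  proof (rule borel_measurable_prod)
    fix m assume "m \<in> {..<N}"
    then have [measurable]: "(\<lambda>x. kakutani_max x m) \<in> borel_measurable (PiM {1..N} (\<lambda>_. borel))" using mx by auto
    show "(\<lambda>x. if tau < kakutani_max x m then 1 else (0::real)) \<in> borel_measurable (PiM {1..N} (\<lambda>_. borel))"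
      by measurable
  qed
  then show ?thesis unfolding Gf_def[abs_def] by measurable
qed

lemma kmax_props:
  assumes u: "\<And>j. 0 \<le> u j \<and> u j \<le> 1"
  shows "0 \<le> kakutani_max u n \<and> kakutani_max u n \<le> 1 \<and> (\<forall>m\<le>n. kakutani_max u n \<le> kakutani_max u m)"
proof -
  have dec: "kakutani_max u (Suc i) \<le> kakutani_max u i" for i using kp_props[of u, OF u] by blast
  have mono: "kakutani_max u n \<le> kakutani_max u m" if "m \<le> n" for m
    using that by (induction n) (auto simp: le_Suc_eq intro: order_trans[OF dec])
  have "kakutani_max u 0 = 1" by (simp add: kakutani_max_def max_len_def)
  moreover obtain p where "p \<in> set (kakutani_part u n)" "ilen p = kakutani_max u n"
    using max_in[of u n] unfolding kakutani_max_def by auto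
  moreover have "\<forall>p\<in>set (kakutani_part u n). 0 \<le> ilen p" using kp_props[of u, OF u] by blast
  ultimately show ?thesis using mono[of 0] mono by auto
qed

lemma poly_exp_bound: "\<exists>B\<ge>0. \<forall>x::real. 0 \<le> x \<longrightarrow> x ^ k \<le> B * exp x"
proof -
  have "eventually (\<lambda>x::real. x ^ k / exp x < 1) at_top"
    by (rule order_tendstoD(2)[OF tendsto_power_div_exp_0]) simp
  then obtain X where X0: "\<forall>x::real\<ge>X. x ^ k / exp x < 1" unfolding eventually_at_top_linorder by blast
  have X: "x ^ k < exp x" if "x \<ge> X" for x
  proof -
    have "x ^ k / exp x < 1" using X0 that by blast
    then show ?thesis by simp
  qed
  define Y where "Y = max X 0"
  have "x ^ k \<le> max 1 (Y ^ k) * exp x" if "0 \<le> x" for x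
  proof (cases "x \<ge> X")
    case True
    then have "x ^ k \<le> 1 * exp x" using X[OF True] by simp
    also have "\<dots> \<le> max 1 (Y ^ k) * exp x" by (intro mult_right_mono) auto
    finally show ?thesis .
  next
    case False
    then have "x ^ k \<le> Y ^ k" using that by (intro power_mono) (auto simp: Y_def)
    also have "\<dots> \<le> max 1 (Y ^ k) * 1" by simp
    also have "\<dots> \<le> max 1 (Y ^ k) * exp x" using that by (intro mult_left_mono) auto
    finally show ?thesis .
  qed
  then show ?thesis by (intro exI[of _ "max 1 (Y ^ k)"]) auto
qed

context prob_space
begin

lemma chain:
  fixes V :: "nat \<Rightarrow> 'a \<Rightarrow> real" and lam tau :: real
  assumes ind: "indep_vars (\<lambda>_. borel) V {1..}"
    and V01: "\<And>i \<omega>. 0 \<le> V i \<omega> \<and> V i \<omega> \<le> 1"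
    and EB: "\<And>i. i \<ge> 1 \<Longrightarrow> expectation (\<lambda>\<omega>. exp (- 6 * Dfun (V i \<omega>))) \<le> 2/3"
    and lam: "0 \<le> lam" "6 \<le> lam * sqrt tau"
  shows "expectation (\<lambda>\<omega>. Gf lam tau N (\<lambda>i. V i \<omega>)) \<le> (2/3)^N"
proof (induction N)
  case 0
  show ?case by (simp add: Gf_def Phi_0 prob_space lam)
next
  case (Suc N)
  have Vm[measurable]: "V i \<in> borel_measurable M" if "i \<ge> 1" for i
    using ind that unfolding indep_vars_def by auto
  have iv: "indep_var (PiM {1..N} (\<lambda>_. borel)) (\<lambda>\<omega>. restrict (\<lambda>i. V i \<omega>) {1..N})
     (PiM {Suc N} (\<lambda>_. borel)) (\<lambda>\<omega>. restrict (\<lambda>i. V i \<omega>) {Suc N})"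
    by (rule indep_var_restrict[OF ind]) auto
  have Hm: "(\<lambda>x. exp (- 6 * Dfun (x (Suc N)))) \<in> borel_measurable (PiM {Suc N} (\<lambda>_. borel))"
    unfolding Dfun_def by measurable
  have iv2: "indep_var borel (Gf lam tau N \<circ> (\<lambda>\<omega>. restrict (\<lambda>i. V i \<omega>) {1..N}))
     borel ((\<lambda>x. exp (- 6 * Dfun (x (Suc N)))) \<circ> (\<lambda>\<omega>. restrict (\<lambda>i. V i \<omega>) {Suc N}))"
    by (rule indep_var_compose[OF iv Gf_meas Hm])
  have e1: "Gf lam tau N \<circ> (\<lambda>\<omega>. restrict (\<lambda>i. V i \<omega>) {1..N}) = (\<lambda>\<omega>. Gf lam tau N (\<lambda>i. V i \<omega>))"
    by (auto simp: fun_eq_iff intro!: Gf_dep)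
  have e2: "(\<lambda>x. exp (- 6 * Dfun (x (Suc N)))) \<circ> (\<lambda>\<omega>. restrict (\<lambda>i. V i \<omega>) {Suc N})
     = (\<lambda>\<omega>. exp (- 6 * Dfun (V (Suc N) \<omega>)))" by (simp add: fun_eq_iff)
  have iv3: "indep_var borel (\<lambda>\<omega>. Gf lam tau N (\<lambda>i. V i \<omega>)) borel (\<lambda>\<omega>. exp (- 6 * Dfun (V (Suc N) \<omega>)))"
    using iv2 unfolding e1 e2 .
  have GmM: "(\<lambda>\<omega>. Gf lam tau K (\<lambda>i. V i \<omega>)) \<in> borel_measurable M" for K
  proof -
    have "(\<lambda>\<omega>. restrict (\<lambda>i. V i \<omega>) {1..K}) \<in> measurable M (PiM {1..K} (\<lambda>_. borel))"
      by (intro measurable_restrict) auto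
    from measurable_comp[OF this Gf_meas] show ?thesis
      by (rule measurable_cong[THEN iffD1, rotated]) (auto intro!: Gf_dep)
  qed
  have int1: "integrable M (\<lambda>\<omega>. Gf lam tau K (\<lambda>i. V i \<omega>))" for K
    by (rule integrable_const_bound[where B=1]) (use Gf_bounds[OF V01 lam(1)] GmM in auto)
  have Bm: "(\<lambda>\<omega>. exp (- 6 * Dfun (V (Suc N) \<omega>))) \<in> borel_measurable M"
    unfolding Dfun_def by measurable
  have B01: "0 \<le> exp (- 6 * Dfun (V (Suc N) \<omega>)) \<and> exp (- 6 * Dfun (V (Suc N) \<omega>)) \<le> 1" for \<omega>
    using Dfun_nonneg[of "V (Suc N) \<omega>"] V01 by auto
  have int2: "integrable M (\<lambda>\<omega>. exp (- 6 * Dfun (V (Suc N) \<omega>)))"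
    by (rule integrable_const_bound[where B=1]) (use B01 Bm in auto)
  have int3: "integrable M (\<lambda>\<omega>. Gf lam tau N (\<lambda>i. V i \<omega>) * exp (- 6 * Dfun (V (Suc N) \<omega>)))"
    by (rule indep_var_integrable[OF iv3 int1 int2])
  have "expectation (\<lambda>\<omega>. Gf lam tau (Suc N) (\<lambda>i. V i \<omega>))
      \<le> expectation (\<lambda>\<omega>. Gf lam tau N (\<lambda>i. V i \<omega>) * exp (- 6 * Dfun (V (Suc N) \<omega>)))"
    by (rule integral_mono[OF int1 int3]) (rule Gf_step[OF V01 lam])
  also have "\<dots> = expectation (\<lambda>\<omega>. Gf lam tau N (\<lambda>i. V i \<omega>)) * expectation (\<lambda>\<omega>. exp (- 6 * Dfun (V (Suc N) \<omega>)))"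
    by (rule indep_var_lebesgue_integral[OF iv3 int1 int2])
  also have "\<dots> \<le> (2/3)^N * (2/3)"
    by (intro mult_mono Suc.IH EB integral_nonneg) (use Gf_bounds[OF V01 lam(1)] in auto)
  finally show ?case by simp
qed

lemma main_bound:
  fixes V :: "nat \<Rightarrow> 'a \<Rightarrow> real"
  assumes ind: "indep_vars (\<lambda>_. borel) V {1..}"
    and V01: "\<And>i \<omega>. 0 \<le> V i \<omega> \<and> V i \<omega> \<le> 1"
    and EB: "\<And>i. i \<ge> 1 \<Longrightarrow> expectation (\<lambda>\<omega>. exp (- 6 * Dfun (V i \<omega>))) \<le> 2/3"
  shows "expectation (\<lambda>\<omega>. kakutani_max (\<lambda>i. V i \<omega>) n ^ k) \<le> (3600 / (real n + 2)) ^ k + exp (- real n / 5)"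
proof -
  define q where "q = sqrt (real n + 2)"
  define tau where "tau = 3600 / (real n + 2)"
  define lam where "lam = q / 10"
  have q: "0 < q" "q * q = real n + 2" by (auto simp: q_def)
  have lam0: "0 \<le> lam" using q by (simp add: lam_def)
  have "sqrt tau = 60 / q" unfolding tau_def q_def by (simp add: real_sqrt_divide)
  then have lam6: "6 \<le> lam * sqrt tau" using q by (simp add: lam_def)
  have Vm[measurable]: "V i \<in> borel_measurable M" if "i \<ge> 1" for i
    using ind that unfolding indep_vars_def by auto
  have GmM: "(\<lambda>\<omega>. Gf lam tau K (\<lambda>i. V i \<omega>)) \<in> borel_measurable M" for K
  proof -
    have "(\<lambda>\<omega>. restrict (\<lambda>i. V i \<omega>) {1..K}) \<in> measurable M (PiM {1..K} (\<lambda>_. borel))"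
      by (intro measurable_restrict) auto
    from measurable_comp[OF this Gf_meas] show ?thesis
      by (rule measurable_cong[THEN iffD1, rotated]) (auto intro!: Gf_dep)
  qed
  have int1: "integrable M (\<lambda>\<omega>. Gf lam tau K (\<lambda>i. V i \<omega>))" for K
    by (rule integrable_const_bound[where B=1]) (use Gf_bounds[OF V01 lam0] GmM in auto)
  have Mm: "(\<lambda>\<omega>. kakutani_max (\<lambda>i. V i \<omega>) n) \<in> borel_measurable M"
    by (rule meas_max) auto
  have intM: "integrable M (\<lambda>\<omega>. kakutani_max (\<lambda>i. V i \<omega>) n ^ k)"
    by (rule integrable_const_bound[where B=1])
      (use kmax_props[OF V01] Mm in \<open>auto simp: power_le_one abs_le_iff\<close>)
  have pw: "kakutani_max (\<lambda>i. V i \<omega>) n ^ k \<le> tau ^ k + Gf lam tau (Suc n) (\<lambda>i. V i \<omega>) * exp (lam * q)" for \<omega>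
  proof -
    let ?u = "\<lambda>i. V i \<omega>"
    have kp: "0 \<le> kakutani_max ?u n \<and> kakutani_max ?u n \<le> 1 \<and> (\<forall>m\<le>n. kakutani_max ?u n \<le> kakutani_max ?u m)"
      by (rule kmax_props) (use V01 in auto)
    have G: "0 \<le> Gf lam tau (Suc n) ?u" using Gf_bounds[of ?u lam] V01 lam0 by auto
    show ?thesis
    proof (cases "kakutani_max ?u n \<le> tau")
      case True
      then have "kakutani_max ?u n ^ k \<le> tau ^ k" using kp by (intro power_mono) auto
      then show ?thesis using G q by (simp add: add_increasing2)
    next
      case False
      then have "(\<Prod>m<Suc n. if tau < kakutani_max ?u m then 1 else (0::real)) = 1"
      proof (intro prod.neutral ballI)
        fix m assume "m \<in> {..<Suc n}"
        then have "kakutani_max ?u n \<le> kakutani_max ?u m" using kp by auto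
        then show "(if tau < kakutani_max ?u m then 1 else (0::real)) = 1" using False by auto
      qed
      then have "Gf lam tau (Suc n) ?u = exp (- lam * Phi ?u (Suc n))" by (simp add: Gf_def)
      moreover have "Phi ?u (Suc n) \<le> q"
        using Phi_le[of ?u "Suc n"] V01 by (simp add: q_def add.commute)
      then have "- lam * q \<le> - lam * Phi ?u (Suc n)" using lam0 by (simp add: mult_left_mono)
      then have "1 \<le> exp (- lam * Phi ?u (Suc n)) * exp (lam * q)" by (simp flip: exp_add)
      ultimately have "1 \<le> Gf lam tau (Suc n) ?u * exp (lam * q)" by simp
      moreover have "kakutani_max ?u n ^ k \<le> 1" using kp by (simp add: power_le_one)
      moreover have "0 \<le> tau ^ k" by (simp add: tau_def)
      ultimately show ?thesis by linarith
    qed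
  qed
  have "expectation (\<lambda>\<omega>. kakutani_max (\<lambda>i. V i \<omega>) n ^ k)
     \<le> expectation (\<lambda>\<omega>. tau ^ k + Gf lam tau (Suc n) (\<lambda>i. V i \<omega>) * exp (lam * q))"
    by (rule integral_mono[OF intM _ pw]) (intro Bochner_Integration.integrable_add integrable_mult_left int1 integrable_const)
  also have "\<dots> = tau ^ k + expectation (\<lambda>\<omega>. Gf lam tau (Suc n) (\<lambda>i. V i \<omega>)) * exp (lam * q)"
    by (subst Bochner_Integration.integral_add) (auto intro!: integrable_mult_left int1 simp: prob_space)
  also have "\<dots> \<le> tau ^ k + (2/3) ^ Suc n * exp (lam * q)"
    using chain[OF ind V01 EB lam0 lam6, of "Suc n"] by (intro add_left_mono mult_right_mono) auto
  also have "(2/3::real) ^ Suc n * exp (lam * q) \<le> exp (- real n / 5)"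
  proof -
    have "exp (1/3::real) \<le> 1 + 1/3 + (1/3)^2" by (rule exp_bound) auto
    then have "exp (1/3::real) \<le> 3/2" by (simp add: power2_eq_square)
    then have "2/3 \<le> exp (- (1/3::real))" by (simp add: exp_minus field_simps)
    then have "(2/3::real) ^ Suc n \<le> exp (- (1/3)) ^ Suc n" by (intro power_mono) auto
    also have "\<dots> = exp (real (Suc n) * (- (1/3)))" by (simp only: exp_of_nat_mult)
    finally have a: "(2/3::real) ^ Suc n \<le> exp (real (Suc n) * (- (1/3)))" .
    have lq: "lam * q = (real n + 2) / 10" using q by (simp add: lam_def)
    have "(2/3::real) ^ Suc n * exp (lam * q) \<le> exp (real (Suc n) * (- (1/3))) * exp ((real n + 2) / 10)"
      unfolding lq using a by (intro mult_right_mono) auto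
    also have "\<dots> = exp (real (Suc n) * (- (1/3)) + (real n + 2) / 10)" by (simp only: exp_add)
    also have "\<dots> \<le> exp (- real n / 5)" by (simp add: field_simps)
    finally show ?thesis .
  qed
  finally show ?thesis by (simp add: tau_def)
qed

end


theorem lemma2p3:
  fixes M :: "'a measure" and U :: "nat \<Rightarrow> 'a \<Rightarrow> real"
  assumes "prob_space M"
    and "prob_space.indep_vars M (\<lambda>_. borel) U {1..}"
    and "\<And>i. i \<ge> 1 \<Longrightarrow> distributed M lborel (U i) (indicator {0..1::real})"
  shows "\<forall>k::nat. \<exists>C::real. C \<ge> 0 \<and>
           (\<forall>n::nat. n \<ge> 1 \<longrightarrow>
              (\<integral>\<omega>. (kakutani_max (\<lambda>i. U i \<omega>) n) ^ k \<partial>M) \<le> C / (real n) ^ k)"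
proof -
  interpret prob_space M by (rule assms(1))
  define V where "V i \<omega> = max 0 (min 1 (U i \<omega>))" for i \<omega>
  have Um[measurable]: "U i \<in> borel_measurable M" if "i \<ge> 1" for i
    using distributed_measurable[OF assms(3)[OF that]] measurable_cong_sets[OF refl sets_lborel] by blast
  have clip: "(\<lambda>x::real. max 0 (min 1 x)) \<in> borel_measurable borel" by measurable
  have ind: "indep_vars (\<lambda>_. borel) V {1..}"
    unfolding V_def by (rule indep_vars_compose2[OF assms(2)]) (use clip in auto)
  have V01: "0 \<le> V i \<omega> \<and> V i \<omega> \<le> 1" for i \<omega> by (simp add: V_def)
  have EB: "expectation (\<lambda>\<omega>. exp (- 6 * Dfun (V i \<omega>))) \<le> 2/3" if i: "i \<ge> 1" for i
  proof -
    define S where "S = U i -` {1/4..3/4} \<inter> space M"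
    have S: "S \<in> sets M" unfolding S_def using Um[OF i] by measurable
    have "emeasure M S = (\<integral>\<^sup>+x. indicator {0..1::real} x * indicator {1/4..3/4} x \<partial>lborel)"
      unfolding S_def by (rule distributed_emeasure[OF assms(3)[OF i]]) simp
    also have "\<dots> = (\<integral>\<^sup>+x. indicator {1/4..3/4::real} x \<partial>lborel)"
      by (intro nn_integral_cong) (auto simp: indicator_def)
    also have "\<dots> = ennreal (1/2)" by simp
    finally have "ennreal (measure M S) = ennreal (1/2)" by (simp only: emeasure_eq_measure)
    then have mS: "measure M S = 1/2" by (subst (asm) ennreal_inj) auto
    have pt: "exp (- 6 * Dfun (V i \<omega>)) \<le> 1 - 2/3 * indicator S \<omega>" if "\<omega> \<in> space M" for \<omega>
    proof -
      have "indicator {1/4..3/4} (V i \<omega>) = (indicator S \<omega> :: real)"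
        using that unfolding S_def V_def by (auto simp: indicator_def)
      then show ?thesis using exp_Dfun[of "V i \<omega>"] V01 by simp
    qed
    have Bm: "(\<lambda>\<omega>. exp (- 6 * Dfun (V i \<omega>))) \<in> borel_measurable M"
      using Um[OF i] unfolding Dfun_def V_def by measurable
    have int2: "integrable M (\<lambda>\<omega>. exp (- 6 * Dfun (V i \<omega>)))"
      by (rule integrable_const_bound[where B=1]) (use Dfun_nonneg V01 Bm in auto)
    have intI: "integrable M (indicator S :: 'a \<Rightarrow> real)"
      using S by (intro integrable_real_indicator) (auto simp: less_top[symmetric])
    have intS: "integrable M (\<lambda>\<omega>. 2/3 * indicator S \<omega> :: real)"
      using intI by (rule integrable_mult_right)
    have intD: "integrable M (\<lambda>\<omega>. 1 - 2/3 * indicator S \<omega> :: real)"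
      using intS by (intro Bochner_Integration.integrable_diff integrable_const)
    have "expectation (\<lambda>\<omega>. exp (- 6 * Dfun (V i \<omega>))) \<le> expectation (\<lambda>\<omega>. 1 - 2/3 * indicator S \<omega>)"
      by (rule integral_mono[OF int2 intD pt])
    also have "\<dots> = 1 - 2/3 * measure M S"
      using S by (subst Bochner_Integration.integral_diff[OF integrable_const intS]) (auto simp: prob_space)
    finally show ?thesis using mS by simp
  qed
  have AE01: "AE \<omega> in M. \<forall>j. j \<ge> 1 \<longrightarrow> U j \<omega> \<in> {0..1}"
  proof (subst AE_all_countable, intro allI)
    fix j :: nat
    show "AE \<omega> in M. j \<ge> 1 \<longrightarrow> U j \<omega> \<in> {0..1}"
    proof (cases "j \<ge> 1")
      case True
      define S where "S = U j -` (- {0..1}) \<inter> space M"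
      have S: "S \<in> sets M" unfolding S_def using Um[OF True] by measurable
      have "emeasure M S = (\<integral>\<^sup>+x. indicator {0..1::real} x * indicator (- {0..1}) x \<partial>lborel)"
        unfolding S_def by (rule distributed_emeasure[OF assms(3)[OF True]]) simp
      also have "\<dots> = (\<integral>\<^sup>+(x::real). 0 \<partial>lborel)"
      proof -
        have h: "\<And>x. indicator {0..1::real} x * indicator (- {0..1}) x = (0::ennreal)"
          by (auto simp: indicator_def)
        show ?thesis by (simp only: h)
      qed
      finally have "S \<in> null_sets M" using S by (simp add: null_sets_def)
      then show ?thesis by (rule AE_I') (auto simp: S_def)
    qed simp
  qed
  show ?thesis
  proof
    fix k :: nat
    obtain B where B: "B \<ge> 0" "\<And>x::real. 0 \<le> x \<Longrightarrow> x ^ k \<le> B * exp x"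
      using poly_exp_bound[of k] by blast
    define C where "C = 3600 ^ k + 5 ^ k * B"
    have "C \<ge> 0" using B by (simp add: C_def)
    moreover have "(\<integral>\<omega>. (kakutani_max (\<lambda>i. U i \<omega>) n) ^ k \<partial>M) \<le> C / (real n) ^ k" if n: "n \<ge> 1" for n
    proof -
      have m1: "(\<lambda>\<omega>. (kakutani_max (\<lambda>i. U i \<omega>) n) ^ k) \<in> borel_measurable M"
        using meas_max[of n "\<lambda>\<omega> i. U i \<omega>" M] Um by auto
      have Vm: "V i \<in> borel_measurable M" if "i \<ge> 1" for i using Um[OF that] unfolding V_def by measurable
      have m2: "(\<lambda>\<omega>. (kakutani_max (\<lambda>i. V i \<omega>) n) ^ k) \<in> borel_measurable M"
        using meas_max[of n "\<lambda>\<omega> i. V i \<omega>" M] Vm by auto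
      have "(\<integral>\<omega>. (kakutani_max (\<lambda>i. U i \<omega>) n) ^ k \<partial>M) = (\<integral>\<omega>. (kakutani_max (\<lambda>i. V i \<omega>) n) ^ k \<partial>M)"
      proof (rule integral_cong_AE[OF m1 m2])
        show "AE \<omega> in M. kakutani_max (\<lambda>i. U i \<omega>) n ^ k = kakutani_max (\<lambda>i. V i \<omega>) n ^ k"
          using AE01
        proof eventually_elim
          case (elim \<omega>)
          then have "kakutani_part (\<lambda>i. U i \<omega>) n = kakutani_part (\<lambda>i. V i \<omega>) n"
            by (intro kp_dep) (auto simp: V_def)
          then show ?case by (simp add: kakutani_max_def)
        qed
      qed
      also have "\<dots> \<le> (3600 / (real n + 2)) ^ k + exp (- real n / 5)"
        by (rule main_bound[OF ind V01 EB])
      also have "\<dots> \<le> C / real n ^ k"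
      proof -
        have n0: "0 < real n" using n by simp
        have "(3600 / (real n + 2)) ^ k \<le> (3600 / real n) ^ k"
          using n0 by (intro power_mono frac_le) auto
        also have "\<dots> = 3600 ^ k / real n ^ k" by (simp add: power_divide)
        finally have a: "(3600 / (real n + 2)) ^ k \<le> 3600 ^ k / real n ^ k" .
        have "(real n / 5) ^ k \<le> B * exp (real n / 5)" using B n0 by auto
        then have "real n ^ k \<le> 5 ^ k * B * exp (real n / 5)" by (simp add: power_divide field_simps)
        then have "real n ^ k * exp (- real n / 5) \<le> 5 ^ k * B * exp (real n / 5) * exp (- real n / 5)"
          by (intro mult_right_mono) auto
        also have "\<dots> = 5 ^ k * B" by (simp flip: exp_add)
        finally have "real n ^ k * exp (- real n / 5) \<le> 5 ^ k * B" .
        then have b: "exp (- real n / 5) \<le> 5 ^ k * B / real n ^ k"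
          using n0 by (simp add: field_simps)
        from add_mono[OF a b] show ?thesis by (simp add: C_def add_divide_distrib)
      qed
      finally show ?thesis .
    qed
    ultimately show "\<exists>C::real. C \<ge> 0 \<and> (\<forall>n::nat. n \<ge> 1 \<longrightarrow>
              (\<integral>\<omega>. (kakutani_max (\<lambda>i. U i \<omega>) n) ^ k \<partial>M) \<le> C / (real n) ^ k)" by blast
  qed
qed

end
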